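(* Let $k\ge1$, let $\alpha_1,\dots,\alpha_k>0$ and $\beta_1,\dots,\beta_k$ be real, and put $\gamma_j=\alpha_{j+1}+\alpha_{j+2}+\dots+\alpha_k+\beta_j+\beta_{j+1}+\dots+\beta_k$ for $j=1,\dots,k$; assume $\gamma_j>0$ for all $j$. Let $(x_1,\dots,x_k)$ have the joint density $$f_1(x_1,\dots,x_k)=C_1\,x_1^{\alpha_1-1}(1-x_1)^{\beta_1}x_2^{\alpha_2-1}(1-x_1-x_2)^{\beta_2}\cdots x_k^{\alpha_k-1}(1-x_1-\dots-x_k)^{\beta_k-1}$$ on $\{x_j>0,\ 0<x_1+\dots+x_j<1,\ j=1,\dots,k\}$ and $0$ elsewhere, where $C_1$ is the normalizing constant. Let $(v_1,\dots,v_k)$ be a vector of positive real random variables with an arbitrary joint density $f(v_1,\dots,v_k)$ on $(0,\infty)^k$, independent of $(x_1,\dots,x_k)$. Let $y_j=\dfrac{x_j}{1-x_1-\dots-x_{j-1}}$ (with denominator $1$ for $j=1$), let $u_j=v_j/y_j$, $j=1,\dots,k$, and let $g(u_1,\dots,u_k)$ be the joint density of $(u_1,\dots,u_k)$. Then, for (almost every) $(u_1,\dots,u_k)\in(0,\infty)^k$, $$I_{u_j,j=1,\dots,k}^{(\alpha_j,\gamma_j),j=1,\dots,k}f(u_1,\dots,u_k)=\Big\{\prod_{j=1}^k\frac{\Gamma(\alpha_j)}{\Gamma(\alpha_j+\gamma_j)}\Big\}g(u_1,\dots,u_k).$$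
   Context: The multivariable Kober fractional integral operator of the first kind is defined, for parameters $\zeta_j$ and $\alpha_j>0$, by $$I_{u_j,j=1,\dots,k}^{(\zeta_j,\alpha_j),j=1,\dots,k}f(u_1,\dots,u_k)=\Big\{\prod_{j=1}^k\frac{u_j^{-\zeta_j-\alpha_j}}{\Gamma(\alpha_j)}\Big\}\int_{0}^{u_1}\cdots\int_{0}^{u_k}\Big\{\prod_{j=1}^k(u_j-v_j)^{\alpha_j-1}v_j^{\zeta_j}\Big\}f(v_1,\dots,v_k)\,dv_1\cdots dv_k;$$ here it is applied with $\zeta_j=\alpha_j$ and $\alpha_j$ replaced by $\gamma_j$. *)

theory Defs
  imports "HOL-Probability.Probability"
begin

text \<open>Indices are 0-based: coordinates j = 0..k-1 correspond to the paper's j = 1..k.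
  Points of R^k are elements of the space of PiM {..<k} (\<lambda>_. lborel).\<close>

abbreviation RK :: "nat \<Rightarrow> (nat \<Rightarrow> real) measure" where
  "RK k \<equiv> PiM {..<k} (\<lambda>_. lborel)"

definition kgamma :: "nat \<Rightarrow> (nat \<Rightarrow> real) \<Rightarrow> (nat \<Rightarrow> real) \<Rightarrow> nat \<Rightarrow> real" where
  "kgamma k \<alpha> \<beta> j = (\<Sum>i\<in>{j<..<k}. \<alpha> i) + (\<Sum>i\<in>{j..<k}. \<beta> i)"

definition dens1 :: "nat \<Rightarrow> (nat \<Rightarrow> real) \<Rightarrow> (nat \<Rightarrow> real) \<Rightarrow> real \<Rightarrow> (nat \<Rightarrow> real) \<Rightarrow> real" where
  "dens1 k \<alpha> \<beta> C x =
     (if (\<forall>j<k. 0 < x j \<and> 0 < (\<Sum>i\<le>j. x i) \<and> (\<Sum>i\<le>j. x i) < 1)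
      then C * (\<Prod>j<k. x j powr (\<alpha> j - 1)
                  * (1 - (\<Sum>i\<le>j. x i)) powr (if j = k - 1 then \<beta> j - 1 else \<beta> j))
      else 0)"

definition kober :: "nat \<Rightarrow> (nat \<Rightarrow> real) \<Rightarrow> (nat \<Rightarrow> real) \<Rightarrow> ((nat \<Rightarrow> real) \<Rightarrow> real)
                      \<Rightarrow> (nat \<Rightarrow> real) \<Rightarrow> ennreal" where
  "kober k \<zeta> a f u =
     ennreal (\<Prod>j<k. u j powr (- \<zeta> j - a j) / Gamma (a j)) *
     (\<integral>\<^sup>+ v. indicator {v. \<forall>j<k. 0 < v j \<and> v j < u j} v *
        ennreal ((\<Prod>j<k. (u j - v j) powr (a j - 1) * v j powr (\<zeta> j)) * f v) \<partial>RK k)"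

end

theory Submission
  imports Defs
begin



lemma psf_lborel: "product_sigma_finite (\<lambda>_::nat. lborel::real measure)"
  by (simp add: product_sigma_finite_def lborel.sigma_finite_measure_axioms)

lemma RK_Suc: "RK (Suc k) = PiM (insert k {..<k}) (\<lambda>_. lborel)"
  by (simp add: lessThan_Suc)

lemma meas_upd[measurable]:
  "(\<lambda>(z::nat\<Rightarrow>real,t::real). z(k:=t)) \<in> measurable (RK k \<Otimes>\<^sub>M lborel) (RK (Suc k))"
proof -
  have "(\<lambda>x. (fst x)(k := snd x)) \<in> measurable (RK k \<Otimes>\<^sub>M lborel) (RK (Suc k))"
    unfolding RK_Suc by (rule measurable_fun_upd[where J="{..<k}"]) auto
  then show ?thesis by (simp add: split_beta')
qed

lemma nn_insert:
  assumes "F \<in> borel_measurable (RK (Suc k))"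
  shows "integral\<^sup>N (RK (Suc k)) F = (\<integral>\<^sup>+ x. (\<integral>\<^sup>+ t. F (x(k := t)) \<partial>lborel) \<partial>RK k)"
  using product_sigma_finite.product_nn_integral_insert[OF psf_lborel, of "{..<k}" k F] assms
  by (simp add: lessThan_Suc)

lemma restrict_upd_eq:
  assumes "x \<in> space (RK k)"
  shows "(\<lambda>j\<in>{..<Suc k}. \<phi> j ((x(k:=t)) j)) = (\<lambda>j\<in>{..<k}. \<phi> j (x j))(k := \<phi> k t)"
  by (rule ext) (auto simp: restrict_def)

lemma prod_upd_eq:
  "(\<Prod>j<Suc k. w j ((x(k:=t)) j)) = (\<Prod>j<k. w j (x j)) * w k t"
  by (simp add: prod.lessThan_Suc)

lemma coord_subst:
  fixes \<phi> :: "nat \<Rightarrow> real \<Rightarrow> real" and w w' :: "nat \<Rightarrow> real \<Rightarrow> ennreal"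
  assumes \<phi>m[measurable]: "\<And>j. \<phi> j \<in> borel_measurable borel"
    and wm[measurable]: "\<And>j. w j \<in> borel_measurable borel"
    and wm'[measurable]: "\<And>j. w' j \<in> borel_measurable borel"
    and one: "\<And>j G. j < k \<Longrightarrow> G \<in> borel_measurable borel \<Longrightarrow>
        (\<integral>\<^sup>+t. G (\<phi> j t) * w j t \<partial>lborel) = (\<integral>\<^sup>+t. G t * w' j t \<partial>lborel)"
    and h: "h \<in> borel_measurable (RK k)"
  shows "(\<integral>\<^sup>+y. h (\<lambda>j\<in>{..<k}. \<phi> j (y j)) * (\<Prod>j<k. w j (y j)) \<partial>RK k)
       = (\<integral>\<^sup>+u. h u * (\<Prod>j<k. w' j (u j)) \<partial>RK k)"
  using h one
proof (induction k arbitrary: h)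
  case 0
  then show ?case by (simp add: PiM_empty nn_integral_count_space_finite)
next
  case (Suc k)
  note hm[measurable] = Suc.prems(1)
  define H where "H z = (\<integral>\<^sup>+t. h (z(k:=t)) * w' k t \<partial>lborel)" for z
  have Hm[measurable]: "H \<in> borel_measurable (RK k)"
    unfolding H_def by measurable
  have \<Phi>m[measurable]: "(\<lambda>y. \<lambda>j\<in>{..<n}. \<phi> j (y j)) \<in> measurable (RK n) (RK n)" for n
    by measurable
  have "(\<integral>\<^sup>+y. h (\<lambda>j\<in>{..<Suc k}. \<phi> j (y j)) * (\<Prod>j<Suc k. w j (y j)) \<partial>RK (Suc k))
      = (\<integral>\<^sup>+x. (\<integral>\<^sup>+t. h (\<lambda>j\<in>{..<Suc k}. \<phi> j ((x(k:=t)) j)) * (\<Prod>j<Suc k. w j ((x(k:=t)) j)) \<partial>lborel) \<partial>RK k)"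
    by (rule nn_insert) measurable
  also have "\<dots> = (\<integral>\<^sup>+x. H (\<lambda>j\<in>{..<k}. \<phi> j (x j)) * (\<Prod>j<k. w j (x j)) \<partial>RK k)"
  proof (rule nn_integral_cong)
    fix x assume x: "x \<in> space (RK k)"
    have xs: "(\<lambda>j\<in>{..<k}. \<phi> j (x j)) \<in> space (RK k)" by (simp add: space_PiM)
    have Gm: "(\<lambda>s. h ((\<lambda>j\<in>{..<k}. \<phi> j (x j))(k := s))) \<in> borel_measurable borel"
    proof -
      have "(\<lambda>s. (\<lambda>j\<in>{..<k}. \<phi> j (x j))(k := s)) \<in> measurable borel (RK (Suc k))"
        unfolding RK_Suc by (rule measurable_fun_upd[where J="{..<k}"]) (use xs in auto)
      from measurable_comp[OF this hm] show ?thesis by (simp add: comp_def)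
    qed
    have "(\<integral>\<^sup>+t. h (\<lambda>j\<in>{..<Suc k}. \<phi> j ((x(k:=t)) j)) * (\<Prod>j<Suc k. w j ((x(k:=t)) j)) \<partial>lborel)
        = (\<integral>\<^sup>+t. (\<Prod>j<k. w j (x j)) * (h ((\<lambda>j\<in>{..<k}. \<phi> j (x j))(k := \<phi> k t)) * w k t) \<partial>lborel)"
      unfolding restrict_upd_eq[OF x] prod_upd_eq by (simp add: mult_ac)
    also have "\<dots> = (\<Prod>j<k. w j (x j)) * (\<integral>\<^sup>+t. h ((\<lambda>j\<in>{..<k}. \<phi> j (x j))(k := \<phi> k t)) * w k t \<partial>lborel)"
      using Gm by (intro nn_integral_cmult) measurable
    also have "\<dots> = (\<Prod>j<k. w j (x j)) * H (\<lambda>j\<in>{..<k}. \<phi> j (x j))"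
      unfolding H_def using Suc.prems(2)[of k, OF _ Gm] by simp
    finally show "(\<integral>\<^sup>+t. h (\<lambda>j\<in>{..<Suc k}. \<phi> j ((x(k:=t)) j)) * (\<Prod>j<Suc k. w j ((x(k:=t)) j)) \<partial>lborel)
        = H (\<lambda>j\<in>{..<k}. \<phi> j (x j)) * (\<Prod>j<k. w j (x j))" by (simp add: mult_ac)
  qed
  also have "\<dots> = (\<integral>\<^sup>+u. H u * (\<Prod>j<k. w' j (u j)) \<partial>RK k)"
    by (rule Suc.IH) (use Suc.prems(2) in auto)
  also have "\<dots> = (\<integral>\<^sup>+x. (\<integral>\<^sup>+t. h (x(k:=t)) * (\<Prod>j<Suc k. w' j ((x(k:=t)) j)) \<partial>lborel) \<partial>RK k)"
  proof (rule nn_integral_cong)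
    fix x assume x: "x \<in> space (RK k)"
    have "(\<integral>\<^sup>+t. h (x(k:=t)) * (\<Prod>j<Suc k. w' j ((x(k:=t)) j)) \<partial>lborel)
        = (\<integral>\<^sup>+t. (\<Prod>j<k. w' j (x j)) * (h (x(k:=t)) * w' k t) \<partial>lborel)"
      by (simp add: prod_upd_eq mult_ac)
    also have "\<dots> = (\<Prod>j<k. w' j (x j)) * H x"
      unfolding H_def using x by (intro nn_integral_cmult) measurable
    finally show "H x * (\<Prod>j<k. w' j (x j)) = (\<integral>\<^sup>+t. h (x(k:=t)) * (\<Prod>j<Suc k. w' j ((x(k:=t)) j)) \<partial>lborel)"
      by (simp add: mult_ac)
  qed
  also have "\<dots> = (\<integral>\<^sup>+u. h u * (\<Prod>j<Suc k. w' j (u j)) \<partial>RK (Suc k))"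
    by (rule nn_insert[symmetric]) measurable
  finally show ?case .
qed




definition dcond :: "nat \<Rightarrow> (nat \<Rightarrow> real) \<Rightarrow> bool" where
  "dcond k x = (\<forall>j<k. 0 < x j \<and> 0 < (\<Sum>i\<le>j. x i) \<and> (\<Sum>i\<le>j. x i) < 1)"

definition dprod :: "nat \<Rightarrow> (nat \<Rightarrow> real) \<Rightarrow> (nat \<Rightarrow> real) \<Rightarrow> (nat \<Rightarrow> real) \<Rightarrow> real" where
  "dprod k \<alpha> \<beta> x = (\<Prod>j<k. x j powr (\<alpha> j - 1) * (1 - (\<Sum>i\<le>j. x i)) powr \<beta> j)"

lemma dcond_pos: "dcond k x \<Longrightarrow> 0 < 1 - (\<Sum>i<k. x i)"
proof (cases k)
  case (Suc m)
  assume "dcond k x"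
  then have "(\<Sum>i\<le>m. x i) < 1" using Suc by (auto simp: dcond_def)
  then show ?thesis using Suc by (simp add: lessThan_Suc_atMost)
qed simp

lemma dcond_nonneg: "dcond k x \<Longrightarrow> 0 \<le> (\<Sum>i<k. x i)"
  unfolding dcond_def by (intro sum_nonneg) (auto intro: less_imp_le)

lemma sum_upd_lt: "(j::nat) < k \<Longrightarrow> (\<Sum>i\<le>j. (x(k:=t)) i) = (\<Sum>i\<le>j. x i)"
  by (rule sum.cong) (auto dest: leD)

lemma sum_upd_lt': "(j::nat) \<le> k \<Longrightarrow> (\<Sum>i<j. (x(k:=t)) i) = (\<Sum>i<j. x i)"
  by (rule sum.cong) (auto dest: leD)

lemma sum_upd_eq': "(\<Sum>i\<le>(k::nat). if i = k then t else x i) = (\<Sum>i<k. x i) + t"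
proof -
  have e: "{..k} = insert k {..<k}" by auto
  have "(\<Sum>i<k. if i = k then t else x i) = (\<Sum>i<k. x i)" by (rule sum.cong) auto
  then show ?thesis unfolding e by (simp add: add.commute)
qed

lemma sum_upd_eq: "(\<Sum>i\<le>(k::nat). (x(k:=t)) i) = (\<Sum>i<k. x i) + t"
  using sum_upd_eq'[of k t x] by (simp add: fun_upd_def)

lemma dcond_Suc_upd:
  "dcond (Suc k) (x(k:=t)) \<longleftrightarrow> dcond k x \<and> 0 < t \<and> t < 1 - (\<Sum>i<k. x i)"
proof -
  have "dcond (Suc k) (x(k:=t)) \<longleftrightarrow> dcond k x \<and> (0 < t \<and> 0 < (\<Sum>i<k. x i) + t \<and> (\<Sum>i<k. x i) + t < 1)"
    unfolding dcond_def by (auto simp: less_Suc_eq sum_upd_lt sum_upd_eq sum_upd_eq')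
  also have "\<dots> \<longleftrightarrow> dcond k x \<and> 0 < t \<and> t < 1 - (\<Sum>i<k. x i)"
    using dcond_nonneg[of k x] by auto
  finally show ?thesis .
qed

lemma dens1_eq: "dens1 k \<alpha> \<beta> C x = (if dcond k x then C * (\<Prod>j<k. x j powr (\<alpha> j - 1)
                  * (1 - (\<Sum>i\<le>j. x i)) powr (if j = k - 1 then \<beta> j - 1 else \<beta> j)) else 0)"
  unfolding dens1_def dcond_def ..

lemma dens1_Suc_upd:
  "dens1 (Suc k) \<alpha> \<beta> 1 (x(k:=t)) = (if dcond k x \<and> 0 < t \<and> t < 1 - (\<Sum>i<k. x i)
      then dprod k \<alpha> \<beta> x * (t powr (\<alpha> k - 1) * (1 - (\<Sum>i<k. x i) - t) powr (\<beta> k - 1)) else 0)"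
proof -
  have "(\<Prod>j<Suc k. (x(k:=t)) j powr (\<alpha> j - 1)
                  * (1 - (\<Sum>i\<le>j. (x(k:=t)) i)) powr (if j = Suc k - 1 then \<beta> j - 1 else \<beta> j))
      = dprod k \<alpha> \<beta> x * (t powr (\<alpha> k - 1) * (1 - (\<Sum>i<k. x i) - t) powr (\<beta> k - 1))"
    unfolding dprod_def prod.lessThan_Suc
    by (auto simp: sum_upd_lt sum_upd_eq sum_upd_eq' diff_diff_eq intro!: prod.cong)
  note eq = this
  show ?thesis unfolding dens1_eq dcond_Suc_upd by (subst eq[symmetric]) simp
qed

lemma dens1_beta':
  assumes "dcond k x"
  shows "dens1 k \<alpha> (\<beta>(k-1 := \<beta> (k-1) + \<alpha> k + \<beta> k)) 1 x
       = dprod k \<alpha> \<beta> x * (1 - (\<Sum>i<k. x i)) powr (\<alpha> k + \<beta> k - 1)"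
proof (cases k)
  case 0 then show ?thesis using assms by (simp add: dens1_eq dprod_def)
next
  case (Suc m)
  have c: "0 < 1 - (\<Sum>i<k. x i)" using dcond_pos[OF assms] .
  have s: "(\<Sum>i\<le>m. x i) = (\<Sum>i<k. x i)" using Suc by (simp add: lessThan_Suc_atMost)
  have "(\<Prod>j<Suc m. x j powr (\<alpha> j - 1) * (1 - (\<Sum>i\<le>j. x i)) powr
          (if j = Suc m - 1 then (\<beta>(Suc m - 1 := \<beta> (Suc m - 1) + \<alpha> (Suc m) + \<beta> (Suc m))) j - 1
           else (\<beta>(Suc m - 1 := \<beta> (Suc m - 1) + \<alpha> (Suc m) + \<beta> (Suc m))) j))
      = (\<Prod>j<m. x j powr (\<alpha> j - 1) * (1 - (\<Sum>i\<le>j. x i)) powr \<beta> j)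
        * (x m powr (\<alpha> m - 1) * (1 - (\<Sum>i\<le>m. x i)) powr (\<beta> m + \<alpha> (Suc m) + \<beta> (Suc m) - 1))"
    unfolding prod.lessThan_Suc by (auto intro!: prod.cong)
  also have "\<dots> = dprod k \<alpha> \<beta> x * (1 - (\<Sum>i<k. x i)) powr (\<alpha> k + \<beta> k - 1)"
    unfolding dprod_def Suc prod.lessThan_Suc using c Suc s
    by (simp add: powr_add[symmetric] algebra_simps)
  finally show ?thesis using assms Suc by (simp add: dens1_eq)
qed




definition Tmap :: "nat \<Rightarrow> (nat \<Rightarrow> real) \<Rightarrow> (nat \<Rightarrow> real)" where
  "Tmap k x = (\<lambda>j\<in>{..<k}. x j / (1 - (\<Sum>i<j. x i)))"

definition bdr :: "real \<Rightarrow> real \<Rightarrow> real \<Rightarrow> real" where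
  "bdr a b y = (if 0 < y \<and> y < 1 then y powr (a - 1) * (1 - y) powr (b - 1) else 0)"

lemma bdr_nonneg: "0 \<le> bdr a b y" by (simp add: bdr_def)

lemma bdr_meas[measurable]: "bdr a b \<in> borel_measurable borel"
  unfolding bdr_def by measurable

lemma Tmap_meas[measurable]: "Tmap k \<in> measurable (RK k) (RK k)"
  unfolding Tmap_def by measurable

lemma dcond_meas[measurable]: "Measurable.pred (RK k) (dcond k)"
proof -
  have e: "dcond k = (\<lambda>x. \<forall>j\<in>{..<k}. 0 < x j \<and> 0 < (\<Sum>i\<le>j. x i) \<and> (\<Sum>i\<le>j. x i) < 1)"
    unfolding dcond_def by auto
  show ?thesis unfolding e by measurable
qed
lemma dens1_meas[measurable]: "dens1 k \<alpha> \<beta> C \<in> borel_measurable (RK k)"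
  unfolding dens1_eq by measurable

lemma dprod_nonneg: "0 \<le> dprod k \<alpha> \<beta> x"
  unfolding dprod_def by (intro prod_nonneg) auto

lemma Tmap_upd:
  assumes "x \<in> space (RK k)"
  shows "Tmap (Suc k) (x(k:=t)) = (Tmap k x)(k := t / (1 - (\<Sum>i<k. x i)))"
  by (rule ext) (auto simp: Tmap_def sum_upd_lt')

lemma kgamma_upd:
  assumes "j < k"
  shows "kgamma k \<alpha> (\<beta>(k-1 := \<beta> (k-1) + \<alpha> k + \<beta> k)) j = kgamma (Suc k) \<alpha> \<beta> j"
proof -
  have e: "\<beta>(k-1 := \<beta> (k-1) + \<alpha> k + \<beta> k) = (\<lambda>i. \<beta> i + (if i = k - 1 then \<alpha> k + \<beta> k else 0))"
    by (rule ext) auto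
  have m: "k - 1 \<in> {j..<k}" using assms by auto
  have "(\<Sum>i\<in>{j..<k}. (if i = k - 1 then \<alpha> k + \<beta> k else 0)) = \<alpha> k + \<beta> k"
    using m by (simp add: sum.delta)
  moreover have "{j<..<Suc k} = insert k {j<..<k}" "{j..<Suc k} = insert k {j..<k}" using assms by auto
  ultimately show ?thesis unfolding kgamma_def e by (simp add: sum.distrib)
qed

lemma kgamma_last: "kgamma (Suc k) \<alpha> \<beta> k = \<beta> k"
proof -
  have "{k<..<Suc k} = {}" "{k..<Suc k} = {k}" by auto
  then show ?thesis by (simp add: kgamma_def)
qed

lemma oneD_affine:
  fixes G :: "real \<Rightarrow> ennreal"
  assumes c: "0 < c" and G[measurable]: "G \<in> borel_measurable borel"
  shows "(\<integral>\<^sup>+t. G (t / c) * ennreal (if 0 < t \<and> t < c then t powr (a - 1) * (c - t) powr (b - 1) else 0) \<partial>lborel)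
       = ennreal (c powr (a + b - 1)) * (\<integral>\<^sup>+y. G y * ennreal (bdr a b y) \<partial>lborel)"
proof -
  have "(\<integral>\<^sup>+t. G (t / c) * ennreal (if 0 < t \<and> t < c then t powr (a - 1) * (c - t) powr (b - 1) else 0) \<partial>lborel)
      = ennreal \<bar>c\<bar> * (\<integral>\<^sup>+y. G ((0 + c * y) / c) * ennreal (if 0 < 0 + c * y \<and> 0 + c * y < c then (0 + c * y) powr (a - 1) * (c - (0 + c * y)) powr (b - 1) else 0) \<partial>lborel)"
    by (rule nn_integral_real_affine) (use c in auto)
  also have "\<dots> = ennreal c * (\<integral>\<^sup>+y. ennreal (c powr (a + b - 2)) * (G y * ennreal (bdr a b y)) \<partial>lborel)"
  proof -
    have "G ((0 + c * y) / c) * ennreal (if 0 < 0 + c * y \<and> 0 + c * y < c then (0 + c * y) powr (a - 1) * (c - (0 + c * y)) powr (b - 1) else 0)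
        = ennreal (c powr (a + b - 2)) * (G y * ennreal (bdr a b y))" for y
    proof (cases "0 < y \<and> y < 1")
      case True
      have "(c * y) powr (a - 1) * (c - c * y) powr (b - 1) = c powr (a + b - 2) * (y powr (a - 1) * (1 - y) powr (b - 1))"
      proof -
        have "c - c * y = c * (1 - y)" by (simp add: algebra_simps)
        then have "(c * y) powr (a - 1) * (c - c * y) powr (b - 1) = (c powr (a - 1) * y powr (a - 1)) * (c powr (b - 1) * (1 - y) powr (b - 1))"
          using c True by (simp add: powr_mult)
        also have "\<dots> = (c powr (a - 1) * c powr (b - 1)) * (y powr (a - 1) * (1 - y) powr (b - 1))" by (simp add: mult_ac)
        also have "c powr (a - 1) * c powr (b - 1) = c powr (a + b - 2)" by (simp add: powr_add[symmetric])
        finally show ?thesis .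
      qed
      note eq = this
      have cy: "(0 + c * y) / c = y" using c by simp
      have cond: "0 < 0 + c * y \<and> 0 + c * y < c" using c True by simp
      have "G ((0 + c * y) / c) * ennreal (if 0 < 0 + c * y \<and> 0 + c * y < c then (0 + c * y) powr (a - 1) * (c - (0 + c * y)) powr (b - 1) else 0)
          = G y * ennreal (c powr (a + b - 2) * (y powr (a - 1) * (1 - y) powr (b - 1)))"
        unfolding cy using cond eq by simp
      also have "\<dots> = ennreal (c powr (a + b - 2)) * (G y * ennreal (bdr a b y))"
        using True by (simp add: bdr_def ennreal_mult mult_ac)
      finally show ?thesis .
    next
      case False
      then have h1: "\<not> (0 < 0 + c * y \<and> 0 + c * y < c)" using c
        by (auto simp: zero_less_mult_iff mult_less_cancel_left1)
      show ?thesis unfolding bdr_def if_not_P[OF h1] if_not_P[OF False] by simp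
    qed
    then show ?thesis using c by simp
  qed
  also have "\<dots> = ennreal c * (ennreal (c powr (a + b - 2)) * (\<integral>\<^sup>+y. G y * ennreal (bdr a b y) \<partial>lborel))"
    by (subst nn_integral_cmult) auto
  also have "\<dots> = ennreal (c powr (a + b - 1)) * (\<integral>\<^sup>+y. G y * ennreal (bdr a b y) \<partial>lborel)"
  proof -
    have "c powr (a + b - 1) = c powr (1 + (a + b - 2))" by simp
    also have "\<dots> = c powr 1 * c powr (a + b - 2)" by (rule powr_add)
    finally have "c * c powr (a + b - 2) = c powr (a + b - 1)" using c by simp
    then show ?thesis using c by (simp add: mult.assoc[symmetric] ennreal_mult[symmetric])
  qed
  finally show ?thesis .
qed




lemma triang:
  assumes "h \<in> borel_measurable (RK k)"
  shows "(\<integral>\<^sup>+x. h (Tmap k x) * ennreal (dens1 k \<alpha> \<beta> 1 x) \<partial>RK k)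
       = (\<integral>\<^sup>+y. h y * (\<Prod>j<k. ennreal (bdr (\<alpha> j) (kgamma k \<alpha> \<beta> j) (y j))) \<partial>RK k)"
  using assms
proof (induction k arbitrary: \<beta> h)
  case 0
  then show ?case by (simp add: PiM_empty nn_integral_count_space_finite dens1_eq dcond_def Tmap_def)
next
  case (Suc k)
  note hm[measurable] = Suc.prems
  define \<beta>' where "\<beta>' = \<beta>(k-1 := \<beta> (k-1) + \<alpha> k + \<beta> k)"
  define H where "H z = (\<integral>\<^sup>+y. h (z(k:=y)) * ennreal (bdr (\<alpha> k) (\<beta> k) y) \<partial>lborel)" for z
  have Hm[measurable]: "H \<in> borel_measurable (RK k)" unfolding H_def by measurable
  have "(\<integral>\<^sup>+x. h (Tmap (Suc k) x) * ennreal (dens1 (Suc k) \<alpha> \<beta> 1 x) \<partial>RK (Suc k))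
      = (\<integral>\<^sup>+x. (\<integral>\<^sup>+t. h (Tmap (Suc k) (x(k:=t))) * ennreal (dens1 (Suc k) \<alpha> \<beta> 1 (x(k:=t))) \<partial>lborel) \<partial>RK k)"
    by (rule nn_insert) measurable
  also have "\<dots> = (\<integral>\<^sup>+x. H (Tmap k x) * ennreal (dens1 k \<alpha> \<beta>' 1 x) \<partial>RK k)"
  proof (rule nn_integral_cong)
    fix x assume x: "x \<in> space (RK k)"
    define c where "c = 1 - (\<Sum>i<k. x i)"
    show "(\<integral>\<^sup>+t. h (Tmap (Suc k) (x(k:=t))) * ennreal (dens1 (Suc k) \<alpha> \<beta> 1 (x(k:=t))) \<partial>lborel)
        = H (Tmap k x) * ennreal (dens1 k \<alpha> \<beta>' 1 x)"
    proof (cases "dcond k x")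
      case True
      have c: "0 < c" using dcond_pos[OF True] unfolding c_def .
      have Tx: "Tmap k x \<in> space (RK k)" using Tmap_meas[of k] x by (rule measurable_space)
      have Gm[measurable]: "(\<lambda>s. h ((Tmap k x)(k := s))) \<in> borel_measurable borel"
      proof -
        have "(\<lambda>s. (Tmap k x)(k := s)) \<in> measurable borel (RK (Suc k))"
          unfolding RK_Suc by (rule measurable_fun_upd[where J="{..<k}"]) (use Tx in auto)
        from measurable_comp[OF this hm] show ?thesis by (simp add: comp_def)
      qed
      have Gm': "(\<lambda>t. h ((Tmap k x)(k := t / c))) \<in> borel_measurable borel"
        using measurable_comp[OF _ Gm, of "\<lambda>t. t / c" borel] by (simp add: comp_def)
      have "(\<integral>\<^sup>+t. h (Tmap (Suc k) (x(k:=t))) * ennreal (dens1 (Suc k) \<alpha> \<beta> 1 (x(k:=t))) \<partial>lborel)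
          = (\<integral>\<^sup>+t. ennreal (dprod k \<alpha> \<beta> x) * (h ((Tmap k x)(k := t / c)) * ennreal (if 0 < t \<and> t < c then t powr (\<alpha> k - 1) * (c - t) powr (\<beta> k - 1) else 0)) \<partial>lborel)"
      proof (rule nn_integral_cong)
        fix t
        show "h (Tmap (Suc k) (x(k:=t))) * ennreal (dens1 (Suc k) \<alpha> \<beta> 1 (x(k:=t)))
            = ennreal (dprod k \<alpha> \<beta> x) * (h ((Tmap k x)(k := t / c)) * ennreal (if 0 < t \<and> t < c then t powr (\<alpha> k - 1) * (c - t) powr (\<beta> k - 1) else 0))"
          unfolding Tmap_upd[OF x] dens1_Suc_upd c_def[symmetric]
          using True by (simp add: ennreal_mult dprod_nonneg mult_ac)
      qed
      also have "\<dots> = ennreal (dprod k \<alpha> \<beta> x) * (\<integral>\<^sup>+t. h ((Tmap k x)(k := t / c)) * ennreal (if 0 < t \<and> t < c then t powr (\<alpha> k - 1) * (c - t) powr (\<beta> k - 1) else 0) \<partial>lborel)"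
        using Gm' by (intro nn_integral_cmult) measurable
      also have "\<dots> = ennreal (dprod k \<alpha> \<beta> x) * (ennreal (c powr (\<alpha> k + \<beta> k - 1)) * H (Tmap k x))"
        using oneD_affine[OF c Gm] unfolding H_def by simp
      also have "\<dots> = H (Tmap k x) * ennreal (dens1 k \<alpha> \<beta>' 1 x)"
        unfolding \<beta>'_def dens1_beta'[OF True] c_def by (simp add: ennreal_mult dprod_nonneg mult_ac)
      finally show ?thesis .
    next
      case False
      have "dens1 k \<alpha> \<beta>' 1 x = 0" using False by (simp add: dens1_eq)
      moreover have "dens1 (Suc k) \<alpha> \<beta> 1 (x(k:=t)) = 0" for t using False by (simp add: dens1_Suc_upd)
      ultimately show ?thesis by simp
    qed
  qed
  also have "\<dots> = (\<integral>\<^sup>+y. H y * (\<Prod>j<k. ennreal (bdr (\<alpha> j) (kgamma k \<alpha> \<beta>' j) (y j))) \<partial>RK k)"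
    by (rule Suc.IH) (rule Hm)
  also have "\<dots> = (\<integral>\<^sup>+x. (\<integral>\<^sup>+t. h (x(k:=t)) * (\<Prod>j<Suc k. ennreal (bdr (\<alpha> j) (kgamma (Suc k) \<alpha> \<beta> j) ((x(k:=t)) j))) \<partial>lborel) \<partial>RK k)"
  proof (rule nn_integral_cong)
    fix x assume x: "x \<in> space (RK k)"
    have p: "(\<Prod>j<k. ennreal (bdr (\<alpha> j) (kgamma k \<alpha> \<beta>' j) (x j))) = (\<Prod>j<k. ennreal (bdr (\<alpha> j) (kgamma (Suc k) \<alpha> \<beta> j) (x j)))"
    proof (rule prod.cong)
      fix j assume "j \<in> {..<k}"
      then show "ennreal (bdr (\<alpha> j) (kgamma k \<alpha> \<beta>' j) (x j)) = ennreal (bdr (\<alpha> j) (kgamma (Suc k) \<alpha> \<beta> j) (x j))"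
        unfolding \<beta>'_def using kgamma_upd[of j k \<alpha> \<beta>] by simp
    qed simp
    have p2: "(\<Prod>j<Suc k. ennreal (bdr (\<alpha> j) (kgamma (Suc k) \<alpha> \<beta> j) ((x(k:=t)) j)))
        = (\<Prod>j<k. ennreal (bdr (\<alpha> j) (kgamma (Suc k) \<alpha> \<beta> j) (x j))) * ennreal (bdr (\<alpha> k) (\<beta> k) t)" for t
    proof -
      have "(\<Prod>j<k. ennreal (bdr (\<alpha> j) (kgamma (Suc k) \<alpha> \<beta> j) ((x(k:=t)) j))) = (\<Prod>j<k. ennreal (bdr (\<alpha> j) (kgamma (Suc k) \<alpha> \<beta> j) (x j)))"
        by (rule prod.cong) auto
      then show ?thesis by (simp add: prod.lessThan_Suc kgamma_last)
    qed
    have "(\<integral>\<^sup>+t. h (x(k:=t)) * (\<Prod>j<Suc k. ennreal (bdr (\<alpha> j) (kgamma (Suc k) \<alpha> \<beta> j) ((x(k:=t)) j))) \<partial>lborel)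
        = (\<integral>\<^sup>+t. (\<Prod>j<k. ennreal (bdr (\<alpha> j) (kgamma (Suc k) \<alpha> \<beta> j) (x j))) * (h (x(k:=t)) * ennreal (bdr (\<alpha> k) (\<beta> k) t)) \<partial>lborel)"
      unfolding p2 by (simp add: mult_ac)
    also have "\<dots> = (\<Prod>j<k. ennreal (bdr (\<alpha> j) (kgamma (Suc k) \<alpha> \<beta> j) (x j))) * H x"
      unfolding H_def using x by (intro nn_integral_cmult) measurable
    finally show "H x * (\<Prod>j<k. ennreal (bdr (\<alpha> j) (kgamma k \<alpha> \<beta>' j) (x j)))
        = (\<integral>\<^sup>+t. h (x(k:=t)) * (\<Prod>j<Suc k. ennreal (bdr (\<alpha> j) (kgamma (Suc k) \<alpha> \<beta> j) ((x(k:=t)) j))) \<partial>lborel)"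
      using p by (simp add: mult_ac)
  qed
  also have "\<dots> = (\<integral>\<^sup>+y. h y * (\<Prod>j<Suc k. ennreal (bdr (\<alpha> j) (kgamma (Suc k) \<alpha> \<beta> j) (y j))) \<partial>RK (Suc k))"
    by (rule nn_insert[symmetric]) measurable
  finally show ?case .
qed




lemma sfP: "sigma_finite_measure (RK k)"
proof -
  interpret finite_product_sigma_finite "\<lambda>_. lborel::real measure" "{..<k}"
    by (simp add: finite_product_sigma_finite_def finite_product_sigma_finite_axioms_def psf_lborel)
  show ?thesis by (rule sigma_finite_measure_axioms)
qed

lemma psfP: "pair_sigma_finite (RK k) (RK k)"
  by (simp add: pair_sigma_finite_def sfP)

lemma beta_nn:
  assumes "0 < a" "0 < b"
  shows "(\<integral>\<^sup>+y. ennreal (bdr a b y) \<partial>lborel) = ennreal (Beta a b)"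
proof -
  have "(\<integral>\<^sup>+y. ennreal (indicator {0..1} y * (y powr (a - 1) * (1 - y) powr (b - 1))) \<partial>lborel) = ennreal (Beta a b)"
    by (rule nn_integral_has_integral_lebesgue) (use has_integral_Beta_real[OF assms] in auto)
  moreover have "indicator {0..1} y * (y powr (a - 1) * (1 - y) powr (b - 1)) = bdr a b y" for y :: real
    by (cases "y = 0 \<or> y = 1") (auto simp: bdr_def indicator_def)
  ultimately show ?thesis by simp
qed

lemma scale1:
  fixes G :: "real \<Rightarrow> ennreal"
  assumes c: "c \<noteq> 0" and G[measurable]: "G \<in> borel_measurable borel"
  shows "(\<integral>\<^sup>+t. G (c * t) * ennreal \<bar>c\<bar> \<partial>lborel) = (\<integral>\<^sup>+t. G t * 1 \<partial>lborel)"
proof -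
  have "(\<integral>\<^sup>+t. G t \<partial>lborel) = ennreal \<bar>c\<bar> * (\<integral>\<^sup>+t. G (0 + c * t) \<partial>lborel)"
    by (rule nn_integral_real_affine) (use c in auto)
  moreover have "(\<integral>\<^sup>+t. G (c * t) * ennreal \<bar>c\<bar> \<partial>lborel) = (\<integral>\<^sup>+t. ennreal \<bar>c\<bar> * G (c * t) \<partial>lborel)"
    by (rule nn_integral_cong) (rule mult.commute)
  moreover have "(\<integral>\<^sup>+t. ennreal \<bar>c\<bar> * G (c * t) \<partial>lborel) = ennreal \<bar>c\<bar> * (\<integral>\<^sup>+t. G (c * t) \<partial>lborel)"
    by (rule nn_integral_cmult) measurable
  ultimately show ?thesis by simp
qed

lemma scaleP:
  assumes c: "\<And>j. j < k \<Longrightarrow> c j \<noteq> 0" and h: "h \<in> borel_measurable (RK k)"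
  shows "(\<integral>\<^sup>+y. h (\<lambda>j\<in>{..<k}. c j * y j) * (\<Prod>j<k. ennreal \<bar>c j\<bar>) \<partial>RK k) = (\<integral>\<^sup>+u. h u \<partial>RK k)"
proof -
  have "(\<integral>\<^sup>+y. h (\<lambda>j\<in>{..<k}. c j * y j) * (\<Prod>j<k. ennreal \<bar>c j\<bar>) \<partial>RK k)
      = (\<integral>\<^sup>+u. h u * (\<Prod>j<k. (\<lambda>_. 1) (u j)) \<partial>RK k)"
  proof (rule coord_subst[where \<phi>="\<lambda>j t. c j * t" and w="\<lambda>j _. ennreal \<bar>c j\<bar>" and w'="\<lambda>j _. 1"])
    fix j and G :: "real \<Rightarrow> ennreal" assume j: "j < k" and G: "G \<in> borel_measurable borel"
    show "(\<integral>\<^sup>+t. G (c j * t) * ennreal \<bar>c j\<bar> \<partial>lborel) = (\<integral>\<^sup>+t. G t * 1 \<partial>lborel)"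
      by (rule scale1[OF c[OF j] G])
  qed (use h in auto)
  then show ?thesis by simp
qed




definition Bf :: "nat \<Rightarrow> (nat \<Rightarrow> real) \<Rightarrow> (nat \<Rightarrow> real) \<Rightarrow> (nat \<Rightarrow> real) \<Rightarrow> ennreal" where
  "Bf k \<alpha> \<beta> y = (\<Prod>j<k. ennreal (bdr (\<alpha> j) (kgamma k \<alpha> \<beta> j) (y j)))"

definition Qf :: "nat \<Rightarrow> (nat \<Rightarrow> real) \<Rightarrow> (nat \<Rightarrow> real) \<Rightarrow> ((nat \<Rightarrow> real) \<Rightarrow> real) \<Rightarrow> (nat \<Rightarrow> real) \<Rightarrow> ennreal" where
  "Qf k \<alpha> \<beta> f u = (\<integral>\<^sup>+y. Bf k \<alpha> \<beta> y * ennreal (f (\<lambda>j\<in>{..<k}. y j * u j)) * (\<Prod>j<k. ennreal \<bar>y j\<bar>) \<partial>RK k)"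

lemma Bf_meas[measurable]: "Bf k \<alpha> \<beta> \<in> borel_measurable (RK k)"
  unfolding Bf_def by measurable

lemma Bf_zero: "\<not> (\<forall>j<k. 0 < y j \<and> y j < 1) \<Longrightarrow> Bf k \<alpha> \<beta> y = 0"
  unfolding Bf_def by (auto simp: bdr_def)

lemma dens1_C: "dens1 k \<alpha> \<beta> C x = C * dens1 k \<alpha> \<beta> 1 x"
  by (simp add: dens1_eq)

lemma dens1_1_nonneg: "0 \<le> dens1 k \<alpha> \<beta> 1 x"
  by (simp add: dens1_eq prod_nonneg)

lemma swapP:
  assumes "(\<lambda>p. G (fst p) (snd p)) \<in> borel_measurable (RK k \<Otimes>\<^sub>M RK k)"
  shows "(\<integral>\<^sup>+a. (\<integral>\<^sup>+b. G a b \<partial>RK k) \<partial>RK k) = (\<integral>\<^sup>+b. (\<integral>\<^sup>+a. G a b \<partial>RK k) \<partial>RK k)"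
  using pair_sigma_finite.Fubini[OF psfP assms] by simp

lemma main_distr:
  fixes M :: "'s measure" and x v :: "'s \<Rightarrow> nat \<Rightarrow> real" and f :: "(nat \<Rightarrow> real) \<Rightarrow> real"
  assumes M: "prob_space M"
    and dx: "distributed M (RK k) x (\<lambda>z. ennreal (dens1 k \<alpha> \<beta> C1 z))"
    and f0: "\<And>z. 0 \<le> f z"
    and dv: "distributed M (RK k) v (\<lambda>z. ennreal (f z))"
    and ind: "prob_space.indep_var M (RK k) x (RK k) v"
    and C1: "0 \<le> C1"
  shows "distr M (RK k) (\<lambda>\<omega>. \<lambda>j\<in>{..<k}. v \<omega> j / (x \<omega> j / (1 - (\<Sum>i<j. x \<omega> i))))
       = density (RK k) (\<lambda>u. ennreal C1 * Qf k \<alpha> \<beta> f u)"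
proof -
  interpret prob_space M by (rule M)
  interpret P: pair_sigma_finite "RK k" "RK k" by (rule psfP)
  have xm[measurable]: "x \<in> measurable M (RK k)" using dx by (rule distributed_measurable)
  have vm[measurable]: "v \<in> measurable M (RK k)" using dv by (rule distributed_measurable)
  have fm[measurable]: "f \<in> borel_measurable (RK k)"
  proof -
    have "(\<lambda>z. ennreal (f z)) \<in> borel_measurable (RK k)" using dv by (rule distributed_borel_measurable)
    then have "(\<lambda>z. enn2real (ennreal (f z))) \<in> borel_measurable (RK k)" by measurable
    then show ?thesis using f0 by simp
  qed
  define U where "U = (\<lambda>\<omega>. \<lambda>j\<in>{..<k}. v \<omega> j / (x \<omega> j / (1 - (\<Sum>i<j. x \<omega> i))))"
  define \<Phi> where "\<Phi> = (\<lambda>(a::nat\<Rightarrow>real, b::nat\<Rightarrow>real). \<lambda>j\<in>{..<k}. b j / (a j / (1 - (\<Sum>i<j. a i))))"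
  have \<Phi>m[measurable]: "\<Phi> \<in> measurable (RK k \<Otimes>\<^sub>M RK k) (RK k)"
    unfolding \<Phi>_def by measurable
  have Ueq: "U \<omega> = \<Phi> (x \<omega>, v \<omega>)" for \<omega>
    unfolding U_def \<Phi>_def by simp
  have Phi_T: "(\<lambda>j\<in>{..<k}. b j / Tmap k a j) = (\<lambda>j\<in>{..<k}. b j / (a j / (1 - (\<Sum>i<j. a i))))" for a b
    by (auto simp: Tmap_def restrict_def)
  have Um[measurable]: "U \<in> measurable M (RK k)"
  proof -
    have e: "U = (\<lambda>\<omega>. \<Phi> (x \<omega>, v \<omega>))" using Ueq by auto
    show ?thesis unfolding e by measurable
  qed
  define dX where "dX = (\<lambda>z. ennreal (dens1 k \<alpha> \<beta> C1 z))"
  define dV where "dV = (\<lambda>z. ennreal (f z))"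
  have dXm[measurable]: "dX \<in> borel_measurable (RK k)" unfolding dX_def by measurable
  have dVm[measurable]: "dV \<in> borel_measurable (RK k)" unfolding dV_def by measurable
  have DX: "distr M (RK k) x = density (RK k) dX" using dx unfolding dX_def by (rule distributed_distr_eq_density)
  have DV: "distr M (RK k) v = density (RK k) dV" using dv unfolding dV_def by (rule distributed_distr_eq_density)
  have "prob_space (density (RK k) dX)" unfolding DX[symmetric] by (rule prob_space_distr) measurable
  then have sX: "sigma_finite_measure (density (RK k) dX)" by (rule prob_space_imp_sigma_finite)
  have "prob_space (density (RK k) dV)" unfolding DV[symmetric] by (rule prob_space_distr) measurable
  then have sV: "sigma_finite_measure (density (RK k) dV)" by (rule prob_space_imp_sigma_finite)
  interpret D: pair_sigma_finite "density (RK k) dX" "density (RK k) dV"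
    using sX sV by (simp add: pair_sigma_finite_def)
  have joint: "distr M (RK k \<Otimes>\<^sub>M RK k) (\<lambda>\<omega>. (x \<omega>, v \<omega>)) = density (RK k) dX \<Otimes>\<^sub>M density (RK k) dV"
    using ind DX DV by (simp add: indep_var_distribution_eq)
  define K where "K = (\<lambda>y u. Bf k \<alpha> \<beta> y * ennreal (f (\<lambda>j\<in>{..<k}. y j * u j)) * (\<Prod>j<k. ennreal \<bar>y j\<bar>))"
  have Km[measurable]: "(\<lambda>(y, u). K y u) \<in> borel_measurable (RK k \<Otimes>\<^sub>M RK k)"
    unfolding K_def by measurable
  have Qeq: "Qf k \<alpha> \<beta> f u = (\<integral>\<^sup>+y. K y u \<partial>RK k)" for u
    unfolding Qf_def K_def ..
  show ?thesis
  proof (rule measure_eqI)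
    show "sets (distr M (RK k) (\<lambda>\<omega>. \<lambda>j\<in>{..<k}. v \<omega> j / (x \<omega> j / (1 - (\<Sum>i<j. x \<omega> i))))) = sets (density (RK k) (\<lambda>u. ennreal C1 * Qf k \<alpha> \<beta> f u))"
      by simp
    fix A assume "A \<in> sets (distr M (RK k) (\<lambda>\<omega>. \<lambda>j\<in>{..<k}. v \<omega> j / (x \<omega> j / (1 - (\<Sum>i<j. x \<omega> i)))))"
    then have A[measurable]: "A \<in> sets (RK k)" by simp
    have "emeasure (distr M (RK k) U) A = (\<integral>\<^sup>+u. indicator A u \<partial>distr M (RK k) U)"
      using A by (simp add: nn_integral_indicator)
    also have "\<dots> = (\<integral>\<^sup>+\<omega>. indicator A (U \<omega>) \<partial>M)"
      by (rule nn_integral_distr) measurable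
    also have "\<dots> = (\<integral>\<^sup>+\<omega>. indicator A (\<Phi> (x \<omega>, v \<omega>)) \<partial>M)"
      by (simp add: Ueq)
    also have "\<dots> = (\<integral>\<^sup>+z. indicator A (\<Phi> z) \<partial>distr M (RK k \<Otimes>\<^sub>M RK k) (\<lambda>\<omega>. (x \<omega>, v \<omega>)))"
      by (rule nn_integral_distr[symmetric]) measurable
    also have "\<dots> = (\<integral>\<^sup>+z. indicator A (\<Phi> z) \<partial>(density (RK k) dX \<Otimes>\<^sub>M density (RK k) dV))"
      by (simp add: joint)
    also have "\<dots> = (\<integral>\<^sup>+b. (\<integral>\<^sup>+a. indicator A (\<Phi> (a, b)) \<partial>density (RK k) dX) \<partial>density (RK k) dV)"
      by (rule D.nn_integral_snd[symmetric]) measurable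
    also have "\<dots> = (\<integral>\<^sup>+b. dV b * (\<integral>\<^sup>+a. indicator A (\<Phi> (a, b)) \<partial>density (RK k) dX) \<partial>RK k)"
      by (rule nn_integral_density) measurable
    also have "\<dots> = (\<integral>\<^sup>+b. dV b * (ennreal C1 * (\<integral>\<^sup>+y. indicator A (\<lambda>j\<in>{..<k}. b j / y j) * Bf k \<alpha> \<beta> y \<partial>RK k)) \<partial>RK k)"
    proof (rule nn_integral_cong)
      fix b assume b: "b \<in> space (RK k)"
      define hb where "hb = (\<lambda>y. indicator A (\<lambda>j\<in>{..<k}. b j / y j) :: ennreal)"
      have hbm[measurable]: "hb \<in> borel_measurable (RK k)" unfolding hb_def using b by measurable
      have "(\<integral>\<^sup>+a. indicator A (\<Phi> (a, b)) \<partial>density (RK k) dX) = (\<integral>\<^sup>+a. dX a * indicator A (\<Phi> (a, b)) \<partial>RK k)"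
        using b by (intro nn_integral_density) measurable
      also have "\<dots> = (\<integral>\<^sup>+a. ennreal C1 * (hb (Tmap k a) * ennreal (dens1 k \<alpha> \<beta> 1 a)) \<partial>RK k)"
        by (rule nn_integral_cong)
           (simp add: dX_def hb_def \<Phi>_def Phi_T dens1_C[of k \<alpha> \<beta> C1] ennreal_mult C1 dens1_1_nonneg mult_ac)
      also have "\<dots> = ennreal C1 * (\<integral>\<^sup>+a. hb (Tmap k a) * ennreal (dens1 k \<alpha> \<beta> 1 a) \<partial>RK k)"
        by (rule nn_integral_cmult) measurable
      also have "\<dots> = ennreal C1 * (\<integral>\<^sup>+y. hb y * Bf k \<alpha> \<beta> y \<partial>RK k)"
        unfolding Bf_def by (subst triang) (use hbm in auto)
      finally show "dV b * (\<integral>\<^sup>+a. indicator A (\<Phi> (a, b)) \<partial>density (RK k) dX)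
          = dV b * (ennreal C1 * (\<integral>\<^sup>+y. indicator A (\<lambda>j\<in>{..<k}. b j / y j) * Bf k \<alpha> \<beta> y \<partial>RK k))"
        unfolding hb_def by simp
    qed
    also have "\<dots> = ennreal C1 * (\<integral>\<^sup>+b. (\<integral>\<^sup>+y. dV b * (indicator A (\<lambda>j\<in>{..<k}. b j / y j) * Bf k \<alpha> \<beta> y) \<partial>RK k) \<partial>RK k)"
    proof -
      have "(\<integral>\<^sup>+b. dV b * (ennreal C1 * (\<integral>\<^sup>+y. indicator A (\<lambda>j\<in>{..<k}. b j / y j) * Bf k \<alpha> \<beta> y \<partial>RK k)) \<partial>RK k)
          = (\<integral>\<^sup>+b. ennreal C1 * (\<integral>\<^sup>+y. dV b * (indicator A (\<lambda>j\<in>{..<k}. b j / y j) * Bf k \<alpha> \<beta> y) \<partial>RK k) \<partial>RK k)"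
      proof (rule nn_integral_cong)
        fix b assume b: "b \<in> space (RK k)"
        have "(\<integral>\<^sup>+y. dV b * (indicator A (\<lambda>j\<in>{..<k}. b j / y j) * Bf k \<alpha> \<beta> y) \<partial>RK k)
            = dV b * (\<integral>\<^sup>+y. indicator A (\<lambda>j\<in>{..<k}. b j / y j) * Bf k \<alpha> \<beta> y \<partial>RK k)"
          using b by (intro nn_integral_cmult) measurable
        then show "dV b * (ennreal C1 * (\<integral>\<^sup>+y. indicator A (\<lambda>j\<in>{..<k}. b j / y j) * Bf k \<alpha> \<beta> y \<partial>RK k))
            = ennreal C1 * (\<integral>\<^sup>+y. dV b * (indicator A (\<lambda>j\<in>{..<k}. b j / y j) * Bf k \<alpha> \<beta> y) \<partial>RK k)"
          by (simp add: mult_ac)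
      qed
      also have "\<dots> = ennreal C1 * (\<integral>\<^sup>+b. (\<integral>\<^sup>+y. dV b * (indicator A (\<lambda>j\<in>{..<k}. b j / y j) * Bf k \<alpha> \<beta> y) \<partial>RK k) \<partial>RK k)"
        by (rule nn_integral_cmult) measurable
      finally show ?thesis .
    qed
    also have "\<dots> = ennreal C1 * (\<integral>\<^sup>+y. (\<integral>\<^sup>+b. dV b * (indicator A (\<lambda>j\<in>{..<k}. b j / y j) * Bf k \<alpha> \<beta> y) \<partial>RK k) \<partial>RK k)"
    proof -
      have "(\<lambda>(b, y). dV b * (indicator A (\<lambda>j\<in>{..<k}. b j / y j) * Bf k \<alpha> \<beta> y)) \<in> borel_measurable (RK k \<Otimes>\<^sub>M RK k)"
        by measurable
      then have m: "(\<lambda>p. (\<lambda>b y. dV b * (indicator A (\<lambda>j\<in>{..<k}. b j / y j) * Bf k \<alpha> \<beta> y)) (fst p) (snd p)) \<in> borel_measurable (RK k \<Otimes>\<^sub>M RK k)"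
        by (simp add: split_beta')
      show ?thesis by (rule arg_cong[where f="\<lambda>z. ennreal C1 * z"]) (rule swapP[OF m])
    qed
    also have "\<dots> = ennreal C1 * (\<integral>\<^sup>+y. (\<integral>\<^sup>+u. K y u * indicator A u \<partial>RK k) \<partial>RK k)"
    proof -
    have "(\<integral>\<^sup>+y. (\<integral>\<^sup>+b. dV b * (indicator A (\<lambda>j\<in>{..<k}. b j / y j) * Bf k \<alpha> \<beta> y) \<partial>RK k) \<partial>RK k)
       = (\<integral>\<^sup>+y. (\<integral>\<^sup>+u. K y u * indicator A u \<partial>RK k) \<partial>RK k)"
    proof (rule nn_integral_cong)
      fix y assume y: "y \<in> space (RK k)"
      show "(\<integral>\<^sup>+b. dV b * (indicator A (\<lambda>j\<in>{..<k}. b j / y j) * Bf k \<alpha> \<beta> y) \<partial>RK k) = (\<integral>\<^sup>+u. K y u * indicator A u \<partial>RK k)"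
      proof (cases "\<forall>j<k. 0 < y j \<and> y j < 1")
        case True
        define F where "F = (\<lambda>b. dV b * (indicator A (\<lambda>j\<in>{..<k}. b j / y j) * Bf k \<alpha> \<beta> y))"
        have Fm: "F \<in> borel_measurable (RK k)" unfolding F_def using y by measurable
        have "(\<integral>\<^sup>+b. F b \<partial>RK k) = (\<integral>\<^sup>+u. F (\<lambda>j\<in>{..<k}. y j * u j) * (\<Prod>j<k. ennreal \<bar>y j\<bar>) \<partial>RK k)"
          by (rule scaleP[symmetric]) (use True Fm in auto)
        also have "\<dots> = (\<integral>\<^sup>+u. K y u * indicator A u \<partial>RK k)"
        proof (rule nn_integral_cong)
          fix u assume u: "u \<in> space (RK k)"
          have "(\<lambda>j\<in>{..<k}. (\<lambda>j\<in>{..<k}. y j * u j) j / y j) = u"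
          proof (rule ext)
            fix j
            show "(\<lambda>j\<in>{..<k}. (\<lambda>j\<in>{..<k}. y j * u j) j / y j) j = u j"
            proof (cases "j < k")
              case jk: True
              then have "y j \<noteq> 0" using True by auto
              then show ?thesis using jk by simp
            next
              case False
              then show ?thesis using u by (auto simp: space_PiM PiE_def extensional_def)
            qed
          qed
          then show "F (\<lambda>j\<in>{..<k}. y j * u j) * (\<Prod>j<k. ennreal \<bar>y j\<bar>) = K y u * indicator A u"
            unfolding F_def K_def dV_def by (simp add: mult_ac)
        qed
        finally show ?thesis unfolding F_def .
      next
        case False
        then show ?thesis by (simp add: Bf_zero K_def)
      qed
    qed
    then show ?thesis by simp
    qed
    also have "\<dots> = ennreal C1 * (\<integral>\<^sup>+u. (\<integral>\<^sup>+y. K y u * indicator A u \<partial>RK k) \<partial>RK k)"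
    proof -
      have "(\<lambda>(y, u). K y u * indicator A u) \<in> borel_measurable (RK k \<Otimes>\<^sub>M RK k)"
        by measurable
      then have m: "(\<lambda>p. (\<lambda>y u. K y u * indicator A u) (fst p) (snd p)) \<in> borel_measurable (RK k \<Otimes>\<^sub>M RK k)"
        by (simp add: split_beta')
      show ?thesis by (rule arg_cong[where f="\<lambda>z. ennreal C1 * z"]) (rule swapP[OF m])
    qed
    also have "\<dots> = ennreal C1 * (\<integral>\<^sup>+u. Qf k \<alpha> \<beta> f u * indicator A u \<partial>RK k)"
    proof (intro arg_cong2[where f="(*)"] refl nn_integral_cong)
      fix u assume u: "u \<in> space (RK k)"
      show "(\<integral>\<^sup>+y. K y u * indicator A u \<partial>RK k) = Qf k \<alpha> \<beta> f u * indicator A u"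
        unfolding Qeq using u by (intro nn_integral_multc) measurable
    qed
    also have "\<dots> = (\<integral>\<^sup>+u. ennreal C1 * Qf k \<alpha> \<beta> f u * indicator A u \<partial>RK k)"
      unfolding Qeq mult.assoc by (rule nn_integral_cmult[symmetric]) measurable
    also have "\<dots> = emeasure (density (RK k) (\<lambda>u. ennreal C1 * Qf k \<alpha> \<beta> f u)) A"
      unfolding Qeq using A by (intro emeasure_density[symmetric]) measurable
    finally show "emeasure (distr M (RK k) (\<lambda>\<omega>. \<lambda>j\<in>{..<k}. v \<omega> j / (x \<omega> j / (1 - (\<Sum>i<j. x \<omega> i))))) A
        = emeasure (density (RK k) (\<lambda>u. ennreal C1 * Qf k \<alpha> \<beta> f u)) A"
      unfolding U_def .
  qed
qed




lemma bdr_scaled: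
  fixes u v a c :: real
  assumes u: "0 < u"
  shows "bdr a c ((1/u) * v) * \<bar>(1/u) * v\<bar> * \<bar>1/u\<bar>
       = (if 0 < v \<and> v < u then u powr (-a-c) * ((u - v) powr (c-1) * v powr a) else 0)"
proof (cases "0 < v \<and> v < u")
  case True
  then have v: "0 < v" "v < u" by auto
  have in01: "0 < (1/u) * v" "(1/u) * v < 1" using u v by (auto simp: field_simps)
  have e1: "(v / u) powr (a - 1) = v powr (a - 1) / u powr (a - 1)"
    using u v by (simp add: powr_divide)
  have e2: "(1 - v / u) powr (c - 1) = (u - v) powr (c - 1) / u powr (c - 1)"
  proof -
    have "1 - v / u = (u - v) / u" using u by (simp add: field_simps)
    then show ?thesis using u v by (simp add: powr_divide)
  qed
  have e3: "v powr (a - 1) * v = v powr a"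
  proof -
    have "v powr a = v powr ((a - 1) + 1)" by simp
    also have "\<dots> = v powr (a - 1) * v powr 1" by (rule powr_add)
    finally have h1: "v powr (a - 1) * v powr 1 = v powr a" by simp
    have h2: "v powr 1 = v" using v by (simp add: powr_one)
    show ?thesis using h1 unfolding h2 .
  qed
  have e4: "u powr (a - 1) * u powr (c - 1) * u * u = u powr (a + c)"
  proof -
    have "u powr (a + c) = u powr ((a - 1) + ((c - 1) + (1 + 1)))" by simp
    also have "\<dots> = u powr (a - 1) * (u powr (c - 1) * (u powr 1 * u powr 1))" by (simp only: powr_add)
    finally have pa: "u powr (a + c) = u powr (a - 1) * (u powr (c - 1) * (u powr 1 * u powr 1))" .
    have h2: "u powr 1 = u" using u by (simp add: powr_one)
    show ?thesis using pa unfolding h2 by (simp add: mult_ac)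
  qed
  have "bdr a c ((1/u) * v) * \<bar>(1/u) * v\<bar> * \<bar>1/u\<bar>
      = (v powr (a - 1) / u powr (a - 1)) * ((u - v) powr (c - 1) / u powr (c - 1)) * (v / u) * (1 / u)"
    using in01 u v by (simp add: bdr_def e1 e2)
  also have "\<dots> = (v powr (a - 1) * v) * (u - v) powr (c - 1) / (u powr (a - 1) * u powr (c - 1) * u * u)"
    by (simp add: field_simps)
  also have "\<dots> = v powr a * (u - v) powr (c - 1) / u powr (a + c)"
    unfolding e3 e4 ..
  also have "\<dots> = u powr (-a-c) * ((u - v) powr (c-1) * v powr a)"
  proof -
    have "u powr (-a-c) = u powr (-(a+c))" by simp
    also have "\<dots> = 1 / u powr (a + c)" by (rule powr_minus_divide)
    finally show ?thesis using u by simp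
  qed
  finally show ?thesis using True by simp
next
  case False
  then have h1: "\<not> (0 < (1/u) * v \<and> (1/u) * v < 1)" using u
    by (auto simp: field_simps zero_less_mult_iff)
  show ?thesis unfolding bdr_def if_not_P[OF h1] if_not_P[OF False] by simp
qed


lemma Beta_pos: "0 < a \<Longrightarrow> 0 < b \<Longrightarrow> 0 < Beta a (b::real)"
  by (simp add: Beta_def)

lemma total_mass:
  assumes a: "\<And>j. j < k \<Longrightarrow> 0 < \<alpha> j" and g: "\<And>j. j < k \<Longrightarrow> 0 < kgamma k \<alpha> \<beta> j"
  shows "(\<integral>\<^sup>+z. ennreal (dens1 k \<alpha> \<beta> 1 z) \<partial>RK k) = ennreal (\<Prod>j<k. Beta (\<alpha> j) (kgamma k \<alpha> \<beta> j))"
proof -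
  have "(\<integral>\<^sup>+z. ennreal (dens1 k \<alpha> \<beta> 1 z) \<partial>RK k) = (\<integral>\<^sup>+x. (\<lambda>_. 1) (Tmap k x) * ennreal (dens1 k \<alpha> \<beta> 1 x) \<partial>RK k)"
    by simp
  also have "\<dots> = (\<integral>\<^sup>+y. (\<lambda>_. 1) y * (\<Prod>j<k. ennreal (bdr (\<alpha> j) (kgamma k \<alpha> \<beta> j) (y j))) \<partial>RK k)"
    by (rule triang) simp
  also have "\<dots> = (\<Prod>j<k. \<integral>\<^sup>+t. ennreal (bdr (\<alpha> j) (kgamma k \<alpha> \<beta> j) t) \<partial>lborel)"
    using product_sigma_finite.product_nn_integral_prod[OF psf_lborel, of "{..<k}" "\<lambda>j t. ennreal (bdr (\<alpha> j) (kgamma k \<alpha> \<beta> j) t)"]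
    by simp
  also have "\<dots> = (\<Prod>j<k. ennreal (Beta (\<alpha> j) (kgamma k \<alpha> \<beta> j)))"
    by (rule prod.cong) (auto intro!: beta_nn a g)
  also have "\<dots> = ennreal (\<Prod>j<k. Beta (\<alpha> j) (kgamma k \<alpha> \<beta> j))"
    by (rule prod_ennreal) (auto intro!: less_imp_le Beta_pos a g)
  finally show ?thesis .
qed

lemma C1_facts:
  fixes M :: "'s measure" and x :: "'s \<Rightarrow> nat \<Rightarrow> real"
  assumes M: "prob_space M"
    and a: "\<And>j. j < k \<Longrightarrow> 0 < \<alpha> j" and g: "\<And>j. j < k \<Longrightarrow> 0 < kgamma k \<alpha> \<beta> j"
    and dx: "distributed M (RK k) x (\<lambda>z. ennreal (dens1 k \<alpha> \<beta> C1 z))"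
  shows "0 < C1" "C1 * (\<Prod>j<k. Beta (\<alpha> j) (kgamma k \<alpha> \<beta> j)) = 1"
proof -
  define dX where "dX = (\<lambda>z. ennreal (dens1 k \<alpha> \<beta> C1 z))"
  have "prob_space (density (RK k) dX)"
    using prob_space.prob_space_distr[OF M distributed_measurable[OF dx]] distributed_distr_eq_density[OF dx]
    unfolding dX_def by simp
  then have e1: "emeasure (density (RK k) dX) (space (RK k)) = 1"
    using prob_space.emeasure_space_1 by fastforce
  have "emeasure (density (RK k) dX) (space (RK k)) = (\<integral>\<^sup>+z. dX z * indicator (space (RK k)) z \<partial>RK k)"
    by (rule emeasure_density) (auto simp: dX_def)
  also have "\<dots> = (\<integral>\<^sup>+z. dX z \<partial>RK k)"
    by (rule nn_integral_cong) simp
  finally have one: "(\<integral>\<^sup>+z. ennreal (dens1 k \<alpha> \<beta> C1 z) \<partial>RK k) = 1"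
    using e1 unfolding dX_def by simp
  have pos: "0 < C1"
  proof (rule ccontr)
    assume "\<not> 0 < C1"
    then have "ennreal (dens1 k \<alpha> \<beta> C1 z) = 0" for z
      by (simp add: dens1_C[of k \<alpha> \<beta> C1] ennreal_eq_0_iff not_less mult_nonpos_nonneg dens1_1_nonneg)
    then show False using one by simp
  qed
  then show "0 < C1" .
  have "(\<integral>\<^sup>+z. ennreal (dens1 k \<alpha> \<beta> C1 z) \<partial>RK k) = (\<integral>\<^sup>+z. ennreal C1 * ennreal (dens1 k \<alpha> \<beta> 1 z) \<partial>RK k)"
    by (rule nn_integral_cong) (use pos in \<open>simp add: dens1_C[of k \<alpha> \<beta> C1] ennreal_mult dens1_1_nonneg\<close>)
  also have "\<dots> = ennreal C1 * (\<integral>\<^sup>+z. ennreal (dens1 k \<alpha> \<beta> 1 z) \<partial>RK k)"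
    by (rule nn_integral_cmult) measurable
  also have "\<dots> = ennreal (C1 * (\<Prod>j<k. Beta (\<alpha> j) (kgamma k \<alpha> \<beta> j)))"
  proof -
    have pB: "0 \<le> (\<Prod>j<k. Beta (\<alpha> j) (kgamma k \<alpha> \<beta> j))"
      by (intro prod_nonneg) (auto intro: less_imp_le Beta_pos a g)
    show ?thesis using total_mass[OF a g] pos pB by (simp add: ennreal_mult)
  qed
  finally show "C1 * (\<Prod>j<k. Beta (\<alpha> j) (kgamma k \<alpha> \<beta> j)) = 1"
    using one pos by (simp add: prod_nonneg Beta_pos a g less_imp_le)
qed

lemma Bf_restrict: "Bf k \<alpha> \<beta> (\<lambda>j\<in>{..<k}. y j) = Bf k \<alpha> \<beta> y"
  unfolding Bf_def by (rule prod.cong) auto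

lemma prod_abs_restrict: "(\<Prod>j<k. ennreal \<bar>(\<lambda>j\<in>{..<k}. y j) j\<bar>) = (\<Prod>j<k. ennreal \<bar>y j\<bar>)"
  by (rule prod.cong) auto

lemma indS_meas[measurable]:
  "(\<lambda>v. indicator {v. \<forall>j<k. 0 < v j \<and> v j < u j} v :: ennreal) \<in> borel_measurable (RK k)"
proof -
  have e: "(\<lambda>v. indicator {v. \<forall>j<k. 0 < v j \<and> v j < u j} v :: ennreal)
      = (\<lambda>v. if (\<forall>j\<in>{..<k}. 0 < v j \<and> v j < u j) then 1 else 0)"
    by (auto simp: indicator_def fun_eq_iff)
  show ?thesis unfolding e by measurable
qed

lemma Q_formula:
  assumes u: "\<And>j. j < k \<Longrightarrow> 0 < u j" and fm[measurable]: "f \<in> borel_measurable (RK k)"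
    and f0: "\<And>z. 0 \<le> f z"
  shows "Qf k \<alpha> \<beta> f u = ennreal (\<Prod>j<k. u j powr (- \<alpha> j - kgamma k \<alpha> \<beta> j)) *
     (\<integral>\<^sup>+v. indicator {v. \<forall>j<k. 0 < v j \<and> v j < u j} v *
        ennreal ((\<Prod>j<k. (u j - v j) powr (kgamma k \<alpha> \<beta> j - 1) * v j powr (\<alpha> j)) * f v) \<partial>RK k)"
proof -
  define R where "R y = Bf k \<alpha> \<beta> y * ennreal (f (\<lambda>j\<in>{..<k}. y j * u j)) * (\<Prod>j<k. ennreal \<bar>y j\<bar>)" for y
  have Rm: "R \<in> borel_measurable (RK k)" unfolding R_def by measurable
  define W where "W v = (\<Prod>j<k. (u j - v j) powr (kgamma k \<alpha> \<beta> j - 1) * v j powr (\<alpha> j))" for v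
  define UP where "UP = (\<Prod>j<k. u j powr (- \<alpha> j - kgamma k \<alpha> \<beta> j))"
  have "Qf k \<alpha> \<beta> f u = (\<integral>\<^sup>+y. R y \<partial>RK k)" unfolding Qf_def R_def ..
  also have "\<dots> = (\<integral>\<^sup>+v. R (\<lambda>j\<in>{..<k}. (1 / u j) * v j) * (\<Prod>j<k. ennreal \<bar>1 / u j\<bar>) \<partial>RK k)"
    by (rule scaleP[symmetric]) (use u Rm in \<open>auto simp: less_imp_neq[symmetric]\<close>)
  also have "\<dots> = (\<integral>\<^sup>+v. ennreal UP * (indicator {v. \<forall>j<k. 0 < v j \<and> v j < u j} v * ennreal (W v * f v)) \<partial>RK k)"
  proof (rule nn_integral_cong)
    fix v assume v: "v \<in> space (RK k)"
    have vv: "(\<lambda>j\<in>{..<k}. (\<lambda>j\<in>{..<k}. (1 / u j) * v j) j * u j) = v"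
    proof (rule ext)
      fix j
      show "(\<lambda>j\<in>{..<k}. (\<lambda>j\<in>{..<k}. (1 / u j) * v j) j * u j) j = v j"
      proof (cases "j < k")
        case jk: True
        then have "u j \<noteq> 0" using u[OF jk] by auto
        then show ?thesis using jk by simp
      next
        case False
        then show ?thesis using v by (auto simp: space_PiM PiE_def extensional_def)
      qed
    qed
    have "R (\<lambda>j\<in>{..<k}. (1 / u j) * v j) * (\<Prod>j<k. ennreal \<bar>1 / u j\<bar>)
        = (\<Prod>j<k. ennreal (bdr (\<alpha> j) (kgamma k \<alpha> \<beta> j) ((1 / u j) * v j))) * ennreal (f v)
          * (\<Prod>j<k. ennreal \<bar>(1 / u j) * v j\<bar>) * (\<Prod>j<k. ennreal \<bar>1 / u j\<bar>)"
      unfolding R_def Bf_restrict prod_abs_restrict vv by (simp only: Bf_def)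
    also have "\<dots> = ennreal ((\<Prod>j<k. bdr (\<alpha> j) (kgamma k \<alpha> \<beta> j) ((1 / u j) * v j)) * f v
          * (\<Prod>j<k. \<bar>(1 / u j) * v j\<bar>) * (\<Prod>j<k. \<bar>1 / u j\<bar>))"
    proof -
      have p1: "(\<Prod>j<k. ennreal (bdr (\<alpha> j) (kgamma k \<alpha> \<beta> j) ((1 / u j) * v j))) = ennreal (\<Prod>j<k. bdr (\<alpha> j) (kgamma k \<alpha> \<beta> j) ((1 / u j) * v j))"
        by (rule prod_ennreal) (simp add: bdr_nonneg)
      have p2: "(\<Prod>j<k. ennreal \<bar>(1 / u j) * v j\<bar>) = ennreal (\<Prod>j<k. \<bar>(1 / u j) * v j\<bar>)"
        by (rule prod_ennreal) simp
      have p3: "(\<Prod>j<k. ennreal \<bar>1 / u j\<bar>) = ennreal (\<Prod>j<k. \<bar>1 / u j\<bar>)"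
        by (rule prod_ennreal) simp
      have n1: "0 \<le> (\<Prod>j<k. bdr (\<alpha> j) (kgamma k \<alpha> \<beta> j) ((1 / u j) * v j))"
        by (rule prod_nonneg) (simp add: bdr_nonneg)
      have n2: "0 \<le> (\<Prod>j<k. \<bar>(1 / u j) * v j\<bar>)" "0 \<le> (\<Prod>j<k. \<bar>1 / u j\<bar>)"
        by (rule prod_nonneg, simp)+
      show ?thesis unfolding p1 p2 p3
        using n1 n2 f0[of v] by (simp only: ennreal_mult mult_nonneg_nonneg)
    qed
    also have "\<dots> = ennreal ((\<Prod>j<k. bdr (\<alpha> j) (kgamma k \<alpha> \<beta> j) ((1 / u j) * v j) * \<bar>(1 / u j) * v j\<bar> * \<bar>1 / u j\<bar>) * f v)"
      by (simp only: prod.distrib mult_ac)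
    also have "\<dots> = ennreal ((\<Prod>j<k. if 0 < v j \<and> v j < u j then u j powr (- \<alpha> j - kgamma k \<alpha> \<beta> j) * ((u j - v j) powr (kgamma k \<alpha> \<beta> j - 1) * v j powr (\<alpha> j)) else 0) * f v)"
    proof (rule arg_cong[where f="\<lambda>p. ennreal (p * f v)"], rule prod.cong)
      fix j assume "j \<in> {..<k}"
      then have jk: "j < k" by simp
      show "bdr (\<alpha> j) (kgamma k \<alpha> \<beta> j) ((1 / u j) * v j) * \<bar>(1 / u j) * v j\<bar> * \<bar>1 / u j\<bar>
          = (if 0 < v j \<and> v j < u j then u j powr (- \<alpha> j - kgamma k \<alpha> \<beta> j) * ((u j - v j) powr (kgamma k \<alpha> \<beta> j - 1) * v j powr (\<alpha> j)) else 0)"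
        by (rule bdr_scaled[OF u[OF jk]])
    qed simp
    also have "\<dots> = ennreal UP * (indicator {v. \<forall>j<k. 0 < v j \<and> v j < u j} v * ennreal (W v * f v))"
    proof (cases "\<forall>j<k. 0 < v j \<and> v j < u j")
      case True
      then have "(\<Prod>j<k. if 0 < v j \<and> v j < u j then u j powr (- \<alpha> j - kgamma k \<alpha> \<beta> j) * ((u j - v j) powr (kgamma k \<alpha> \<beta> j - 1) * v j powr (\<alpha> j)) else 0)
          = UP * W v"
        unfolding UP_def W_def by (simp add: prod.distrib[symmetric])
      then show ?thesis using True
        by (simp add: ennreal_mult[symmetric] UP_def W_def prod_nonneg f0 mult.assoc)
    next
      case False
      then obtain j where "j < k" "\<not> (0 < v j \<and> v j < u j)" by auto
      then have "(\<Prod>j<k. if 0 < v j \<and> v j < u j then u j powr (- \<alpha> j - kgamma k \<alpha> \<beta> j) * ((u j - v j) powr (kgamma k \<alpha> \<beta> j - 1) * v j powr (\<alpha> j)) else 0) = 0"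
        by (intro prod_zero) auto
      note z = this
      show ?thesis unfolding z using False by simp
    qed
    finally show "R (\<lambda>j\<in>{..<k}. (1 / u j) * v j) * (\<Prod>j<k. ennreal \<bar>1 / u j\<bar>)
        = ennreal UP * (indicator {v. \<forall>j<k. 0 < v j \<and> v j < u j} v * ennreal (W v * f v))" .
  qed
  also have "\<dots> = ennreal UP * (\<integral>\<^sup>+v. indicator {v. \<forall>j<k. 0 < v j \<and> v j < u j} v * ennreal (W v * f v) \<partial>RK k)"
    unfolding W_def by (rule nn_integral_cmult) measurable
  finally show ?thesis unfolding UP_def W_def .
qed




theorem theorem2p5:
  fixes M :: "'s measure"
    and k :: nat and \<alpha> \<beta> :: "nat \<Rightarrow> real" and C1 :: real
    and x v :: "'s \<Rightarrow> nat \<Rightarrow> real"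
    and f g :: "(nat \<Rightarrow> real) \<Rightarrow> real"
  assumes "prob_space M"
    and "k \<ge> 1"
    and "\<And>j. j < k \<Longrightarrow> \<alpha> j > 0"
    and "\<And>j. j < k \<Longrightarrow> kgamma k \<alpha> \<beta> j > 0"
    and "distributed M (RK k) x (\<lambda>z. ennreal (dens1 k \<alpha> \<beta> C1 z))"
    and "\<And>z. 0 \<le> f z"
    and "\<And>z. z \<in> space (RK k) \<Longrightarrow> (\<exists>j<k. z j \<le> 0) \<Longrightarrow> f z = 0"
    and "distributed M (RK k) v (\<lambda>z. ennreal (f z))"
    and "prob_space.indep_var M (RK k) x (RK k) v"
    and "\<And>z. 0 \<le> g z"
    and "distributed M (RK k)
           (\<lambda>\<omega>. \<lambda>j\<in>{..<k}. v \<omega> j / (x \<omega> j / (1 - (\<Sum>i<j. x \<omega> i))))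
           (\<lambda>z. ennreal (g z))"
  shows "AE u in RK k. (\<forall>j<k. 0 < u j) \<longrightarrow>
           kober k \<alpha> (kgamma k \<alpha> \<beta>) f u
             = ennreal (\<Prod>j<k. Gamma (\<alpha> j) / Gamma (\<alpha> j + kgamma k \<alpha> \<beta> j)) * ennreal (g u)"
proof -
  interpret prob_space M by (rule assms(1))
  define \<gamma> where "\<gamma> = kgamma k \<alpha> \<beta>"
  have C1pos: "0 < C1" and C1B: "C1 * (\<Prod>j<k. Beta (\<alpha> j) (kgamma k \<alpha> \<beta> j)) = 1"
    using C1_facts[OF assms(1) assms(3) assms(4) assms(5)] by auto
  have fm[measurable]: "f \<in> borel_measurable (RK k)"
  proof -
    have "(\<lambda>z. ennreal (f z)) \<in> borel_measurable (RK k)" using assms(8) by (rule distributed_borel_measurable)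
    then have "(\<lambda>z. enn2real (ennreal (f z))) \<in> borel_measurable (RK k)" by measurable
    then show ?thesis using assms(6) by simp
  qed
  note D1 = main_distr[OF assms(1) assms(5) assms(6) assms(8) assms(9) less_imp_le[OF C1pos]]
  note D2 = distributed_distr_eq_density[OF assms(11)]
  have gm: "(\<lambda>z. ennreal (g z)) \<in> borel_measurable (RK k)"
    using assms(11) by (rule distributed_borel_measurable)
  have Qm: "(\<lambda>u. ennreal C1 * Qf k \<alpha> \<beta> f u) \<in> borel_measurable (RK k)"
  proof -
    interpret S: sigma_finite_measure "RK k" by (rule sfP)
    show ?thesis unfolding Qf_def by measurable
  qed
  have AE: "AE u in RK k. ennreal (g u) = ennreal C1 * Qf k \<alpha> \<beta> f u"
    by (rule sigma_finite_measure.density_unique[OF sfP gm Qm]) (use D1 D2 in simp)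
  have Gpos: "0 < Gamma (\<alpha> j)" "0 < Gamma (\<gamma> j)" "0 < Gamma (\<alpha> j + \<gamma> j)" if "j < k" for j
    using assms(3)[OF that] assms(4)[OF that] unfolding \<gamma>_def by auto
  have Bpos: "0 < (\<Prod>j<k. Beta (\<alpha> j) (\<gamma> j))"
    by (rule prod_pos) (use assms(3) assms(4) in \<open>auto simp: \<gamma>_def intro!: Beta_pos\<close>)
  have C1eq: "C1 = 1 / (\<Prod>j<k. Beta (\<alpha> j) (\<gamma> j))"
  proof -
    have "(\<Prod>j<k. Beta (\<alpha> j) (\<gamma> j)) \<noteq> 0" using Bpos by linarith
    then show ?thesis using C1B unfolding \<gamma>_def by (simp add: eq_divide_eq)
  qed
  have key: "(\<Prod>j<k. Gamma (\<alpha> j) / Gamma (\<alpha> j + \<gamma> j)) * C1 = (\<Prod>j<k. 1 / Gamma (\<gamma> j))"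
  proof -
    have "(\<Prod>j<k. Gamma (\<alpha> j) / Gamma (\<alpha> j + \<gamma> j)) * C1
        = (\<Prod>j<k. Gamma (\<alpha> j) / Gamma (\<alpha> j + \<gamma> j)) / (\<Prod>j<k. Beta (\<alpha> j) (\<gamma> j))"
      unfolding C1eq by simp
    also have "\<dots> = (\<Prod>j<k. (Gamma (\<alpha> j) / Gamma (\<alpha> j + \<gamma> j)) / Beta (\<alpha> j) (\<gamma> j))"
      by (rule prod_dividef[symmetric])
    also have "\<dots> = (\<Prod>j<k. 1 / Gamma (\<gamma> j))"
    proof (rule prod.cong)
      fix j assume "j \<in> {..<k}"
      then have jk: "j < k" by simp
      show "(Gamma (\<alpha> j) / Gamma (\<alpha> j + \<gamma> j)) / Beta (\<alpha> j) (\<gamma> j) = 1 / Gamma (\<gamma> j)"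
        using Gpos[OF jk] by (simp add: Beta_def field_simps)
    qed simp
    finally show ?thesis .
  qed
  show ?thesis
  proof (rule AE_mp[OF AE], rule AE_I2, intro impI)
    fix u assume u: "u \<in> space (RK k)" and eq: "ennreal (g u) = ennreal C1 * Qf k \<alpha> \<beta> f u"
      and pos: "\<forall>j<k. 0 < u j"
    define I where "I = (\<integral>\<^sup>+v. indicator {v. \<forall>j<k. 0 < v j \<and> v j < u j} v *
        ennreal ((\<Prod>j<k. (u j - v j) powr (kgamma k \<alpha> \<beta> j - 1) * v j powr (\<alpha> j)) * f v) \<partial>RK k)"
    define P where "P = (\<Prod>j<k. u j powr (- \<alpha> j - kgamma k \<alpha> \<beta> j))"
    define A where "A = (\<Prod>j<k. Gamma (\<alpha> j) / Gamma (\<alpha> j + kgamma k \<alpha> \<beta> j))"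
    have Q: "Qf k \<alpha> \<beta> f u = ennreal P * I"
      unfolding P_def I_def by (rule Q_formula) (use pos assms(6) in auto)
    have K: "kober k \<alpha> (kgamma k \<alpha> \<beta>) f u = ennreal (\<Prod>j<k. u j powr (- \<alpha> j - kgamma k \<alpha> \<beta> j) / Gamma (kgamma k \<alpha> \<beta> j)) * I"
      unfolding kober_def I_def ..
    have r: "(\<Prod>j<k. u j powr (- \<alpha> j - kgamma k \<alpha> \<beta> j) / Gamma (kgamma k \<alpha> \<beta> j)) = A * C1 * P"
    proof -
      have "(\<Prod>j<k. u j powr (- \<alpha> j - kgamma k \<alpha> \<beta> j) / Gamma (kgamma k \<alpha> \<beta> j))
          = (\<Prod>j<k. 1 / Gamma (\<gamma> j)) * P"
        unfolding P_def \<gamma>_def by (simp add: prod_dividef)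
      then show ?thesis using key unfolding A_def \<gamma>_def by simp
    qed
    have A0: "0 \<le> A" unfolding A_def
      by (rule prod_nonneg) (use Gpos in \<open>auto simp: \<gamma>_def intro!: divide_nonneg_nonneg less_imp_le\<close>)
    have P0: "0 \<le> P" unfolding P_def by (rule prod_nonneg) simp
    show "kober k \<alpha> (kgamma k \<alpha> \<beta>) f u
        = ennreal (\<Prod>j<k. Gamma (\<alpha> j) / Gamma (\<alpha> j + kgamma k \<alpha> \<beta> j)) * ennreal (g u)"
      unfolding K eq Q r A_def[symmetric]
      using A0 P0 C1pos by (simp add: ennreal_mult mult_ac)
  qed
qed


end
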